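(* Let $a,b,c$ be real numbers with $0<a,b<+\infty$ and $a+b<c<a+b+1$. Define $$P(a,b,c):=\frac{\Gamma(c)\Gamma(c-a-b)}{\Gamma(c-a)\Gamma(c-b)},\qquad Q(a,b,c):=\frac{\Gamma(c)\Gamma(a+b+1-c)}{(c-a-b)\Gamma(a)\Gamma(b)},$$ and $q(a,b,c):=Q(a,b,c)$ if $P(a,b,c)\geq Q(a,b,c)$, $q(a,b,c):=P(a,b,c)-1$ if $P(a,b,c)<Q(a,b,c)$. Then for all $w\in(0,1)$, $$F(a,b,c;w)^2>P(a,b,c)^2-2P(a,b,c)Q(a,b,c)(1-w)^{c-a-b}+q(a,b,c)^2(1-w)^{2(c-a-b)}.$$
   Context: $F(\alpha,\beta,\gamma;w)$ denotes the Gauss hypergeometric function ${}_2F_1$ and $\Gamma$ the Gamma function. *)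

theory Defs
  imports "HOL-Analysis.Analysis"
begin

definition hyp2F1 :: "real \<Rightarrow> real \<Rightarrow> real \<Rightarrow> real \<Rightarrow> real" where
  "hyp2F1 a b c w =
     (\<Sum>n. pochhammer a n * pochhammer b n / (pochhammer c n * fact n) * w ^ n)"

definition PP :: "real \<Rightarrow> real \<Rightarrow> real \<Rightarrow> real" where
  "PP a b c = Gamma c * Gamma (c - a - b) / (Gamma (c - a) * Gamma (c - b))"

definition QQ :: "real \<Rightarrow> real \<Rightarrow> real \<Rightarrow> real" where
  "QQ a b c = Gamma c * Gamma (a + b + 1 - c) / ((c - a - b) * Gamma a * Gamma b)"

definition qq :: "real \<Rightarrow> real \<Rightarrow> real \<Rightarrow> real" where
  "qq a b c = (if PP a b c \<ge> QQ a b c then QQ a b c else PP a b c - 1)"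

end

theory Submission
  imports Defs "HOL-Real_Asymp.Real_Asymp"
begin


lemma GS_pos: fixes x :: real assumes "x > 0" "n > 0" shows "Gamma_series x n > 0"
  using assms by (simp add: Gamma_series_def pochhammer_pos)

lemma poch_GS:
  fixes x :: real assumes "x > 0" "n > 0"
  shows "pochhammer x (Suc n) = fact n * real n powr x / Gamma_series x n"
proof -
  have p: "pochhammer x (Suc n) > 0" using assms by (intro pochhammer_pos)
  have "Gamma_series x n = fact n * real n powr x / pochhammer x (Suc n)"
    using assms by (simp add: Gamma_series_def powr_def)
  then show ?thesis using p GS_pos[OF assms] by (simp add: field_simps)
qed

lemma poch_GS':
  fixes x :: real assumes "x > 0" "n > 0"
  shows "pochhammer x n = fact n * real n powr x / (Gamma_series x n * (x + n))"
proof -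
  have "pochhammer x (Suc n) = (x + n) * pochhammer x n" by (rule pochhammer_rec')
  moreover have "x + n > 0" using assms by simp
  ultimately have "(x + n) * pochhammer x n * Gamma_series x n = fact n * real n powr x"
    using poch_GS[OF assms] GS_pos[OF assms] by (simp add: field_simps)
  then show ?thesis using GS_pos[OF assms] \<open>x + n > 0\<close> by (simp add: eq_divide_eq mult_ac)
qed

lemma Gamma_nz: "x > 0 \<Longrightarrow> Gamma x \<noteq> (0::real)"
  using Gamma_real_pos[of x] by linarith

definition AA :: "real \<Rightarrow> real \<Rightarrow> real \<Rightarrow> nat \<Rightarrow> real" where
  "AA a b c n = pochhammer a n * pochhammer b n / (pochhammer c n * fact n)"

lemma AA_pos: "a > 0 \<Longrightarrow> b > 0 \<Longrightarrow> c > 0 \<Longrightarrow> AA a b c n > 0"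
  unfolding AA_def by (intro divide_pos_pos mult_pos_pos pochhammer_pos) auto


lemma poch_frac_lim:
  fixes s :: real assumes "0 < s" "s < 1"
  shows "(\<lambda>n. pochhammer (1 - s) n / fact n) \<longlonglongrightarrow> 0"
proof -
  have ev: "eventually (\<lambda>n. real n powr (1 - s) / (Gamma_series (1 - s) n * (1 - s + n))
      = pochhammer (1 - s) n / fact n) sequentially"
    using eventually_gt_at_top[of 0]
    by eventually_elim (use assms in \<open>simp add: poch_GS'\<close>)
  have l1: "(\<lambda>n. real n powr (1 - s) / (1 - s + n)) \<longlonglongrightarrow> 0"
    using assms by real_asymp
  have "(\<lambda>n. (real n powr (1 - s) / (1 - s + n)) * (1 / Gamma_series (1 - s) n)) \<longlonglongrightarrow> 0 * (1 / Gamma (1 - s))"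
    using assms by (intro tendsto_intros l1) (simp add: Gamma_real_pos less_imp_neq[symmetric])
  then have "(\<lambda>n. real n powr (1 - s) / (Gamma_series (1 - s) n * (1 - s + n))) \<longlonglongrightarrow> 0"
    by (simp add: mult.commute)
  then show ?thesis using ev by (rule Lim_transform_eventually)
qed

lemma poch_d_lim:
  fixes d :: real assumes "0 < d" "d < 1"
  shows "(\<lambda>n. pochhammer d n / fact n) \<longlonglongrightarrow> 0"
  using poch_frac_lim[of "1 - d"] assms by simp

definition rr :: "real \<Rightarrow> real \<Rightarrow> real \<Rightarrow> nat \<Rightarrow> real" where
  "rr a b c n = pochhammer a (Suc n) * pochhammer b (Suc n) /
      (pochhammer c (Suc n) * pochhammer (a + b + 1 - c) n)"

definition pp :: "real \<Rightarrow> real \<Rightarrow> real \<Rightarrow> nat \<Rightarrow> real" where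
  "pp a b c n = pochhammer (-(c - a - b)) n / fact n"

context
  fixes a b c :: real
  assumes a: "0 < a" and b: "0 < b" and c1: "a + b < c" and c2: "c < a + b + 1"
begin

lemma rr_lim: "rr a b c \<longlonglongrightarrow> Gamma c * Gamma (a + b + 1 - c) / (Gamma a * Gamma b)"
proof -
  define d where "d = a + b + 1 - c"
  have d: "0 < d" "d < 1" using c1 c2 by (auto simp: d_def)
  have c: "c > 0" using a b c1 by simp
  have ev: "eventually (\<lambda>n. (1 / real n * (d + n)) *
       (Gamma_series c n * Gamma_series d n / (Gamma_series a n * Gamma_series b n)) = rr a b c n) sequentially"
    using eventually_gt_at_top[of 0]
  proof eventually_elim
    case (elim n)
    have e1: "real n powr a * real n powr b = real n powr (a + b)" by (simp add: powr_add)
    have "real n powr c * real n powr d = real n powr ((a + b) + 1)"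
      by (simp add: powr_add[symmetric] d_def add_ac)
    also have "\<dots> = real n powr (a + b) * real n powr 1" by (rule powr_add)
    finally have e2: "real n powr c * real n powr d = real n powr (a + b) * real n"
      by simp
    have gp: "Gamma_series a n > 0" "Gamma_series b n > 0" "Gamma_series c n > 0" "Gamma_series d n > 0"
      using GS_pos a b c d elim by auto
    have "rr a b c n = (fact n * real n powr a / Gamma_series a n) * (fact n * real n powr b / Gamma_series b n) /
       ((fact n * real n powr c / Gamma_series c n) * (fact n * real n powr d / (Gamma_series d n * (d + n))))"
      unfolding rr_def d_def[symmetric] using poch_GS a b c elim poch_GS'[OF d(1) elim] by simp
    also have "\<dots> = (real n powr a * real n powr b) / (real n powr c * real n powr d) * (d + n) *
       (Gamma_series c n * Gamma_series d n / (Gamma_series a n * Gamma_series b n))"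
      using gp d elim by (simp add: field_simps)
    also have "\<dots> = (1 / real n * (d + n)) *
       (Gamma_series c n * Gamma_series d n / (Gamma_series a n * Gamma_series b n))"
      unfolding e1 e2 using elim by (simp add: field_simps)
    finally show ?case by simp
  qed
  have l1: "(\<lambda>n. 1 / real n * (d + n)) \<longlonglongrightarrow> 1" by real_asymp
  have "(\<lambda>n. (1 / real n * (d + n)) *
       (Gamma_series c n * Gamma_series d n / (Gamma_series a n * Gamma_series b n)))
       \<longlonglongrightarrow> 1 * (Gamma c * Gamma d / (Gamma a * Gamma b))"
    using a b by (intro tendsto_intros l1) (auto simp: Gamma_nz)
  then have "(\<lambda>n. (1 / real n * (d + n)) *
       (Gamma_series c n * Gamma_series d n / (Gamma_series a n * Gamma_series b n)))
       \<longlonglongrightarrow> Gamma c * Gamma (a + b + 1 - c) / (Gamma a * Gamma b)" by (simp add: d_def)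
  then show ?thesis using ev by (rule Lim_transform_eventually)
qed

lemma rr_Suc: "rr a b c (Suc n) = rr a b c n * ((a + n + 1) * (b + n + 1) / ((c + n + 1) * (a + b + 1 - c + n)))"
proof -
  have "c + n + 1 > 0" "a + b + 1 - c + n > 0" "pochhammer c (Suc n) > 0" "pochhammer (a + b + 1 - c) n > 0"
    using a b c1 c2 by (auto intro!: pochhammer_pos)
  have "rr a b c (Suc n) = (pochhammer a (Suc n) * (a + n + 1) * (pochhammer b (Suc n) * (b + n + 1))) /
     ((pochhammer c (Suc n) * (c + n + 1)) * (pochhammer (a + b + 1 - c) n * (a + b + 1 - c + n)))"
  proof -
    have h: "pochhammer x (Suc (Suc n)) = pochhammer x (Suc n) * (x + n + 1)" for x :: real
      by (subst pochhammer_Suc[of _ "Suc n"]) (simp add: add_ac)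
    have h2: "pochhammer (a + b + 1 - c) (Suc n) = pochhammer (a + b + 1 - c) n * (a + b + 1 - c + n)"
      by (rule pochhammer_Suc)
    show ?thesis unfolding rr_def h[of a] h[of b] h[of c] h2 ..
  qed
  also have "\<dots> = (pochhammer a (Suc n) * pochhammer b (Suc n) * ((a + n + 1) * (b + n + 1))) /
     ((pochhammer c (Suc n) * pochhammer (a + b + 1 - c) n) * ((c + n + 1) * (a + b + 1 - c + n)))"
    by (simp add: mult_ac)
  also have "\<dots> = rr a b c n * ((a + n + 1) * (b + n + 1) / ((c + n + 1) * (a + b + 1 - c + n)))"
    unfolding rr_def by (rule times_divide_times_eq[symmetric])
  finally show ?thesis .
qed

lemma rr_pos: "rr a b c n > 0"
  unfolding rr_def using a b c1 c2 by (auto intro!: divide_pos_pos mult_pos_pos pochhammer_pos)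

lemma rr_less: "rr a b c n < rr a b c (Suc n)"
proof -
  have pos: "(c + n + 1) * (a + b + 1 - c + n) > 0" using a b c1 c2 by (auto intro!: mult_pos_pos)
  have "(c + n + 1) * (a + b + 1 - c + n) < (a + n + 1) * (b + n + 1)"
  proof -
    have "(a + n + 1) * (b + n + 1) - (c + n + 1) * (a + b + 1 - c + n) = a * b + c * (c - a - b)"
      by (simp add: algebra_simps)
    moreover have "c * (c - a - b) > 0" using a b c1 by (auto intro!: mult_pos_pos)
    moreover have "a * b > 0" using a b by simp
    ultimately show ?thesis by linarith
  qed
  then have "1 < (a + n + 1) * (b + n + 1) / ((c + n + 1) * (a + b + 1 - c + n))"
    using pos by simp
  then show ?thesis unfolding rr_Suc using rr_pos[of n]
    by (metis mult.right_neutral mult_strict_left_mono)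
qed

lemma rr_lt: "rr a b c n < Gamma c * Gamma (a + b + 1 - c) / (Gamma a * Gamma b)"
proof -
  have "incseq (rr a b c)" using rr_less by (intro incseq_SucI less_imp_le)
  then have "rr a b c (Suc n) \<le> Gamma c * Gamma (a + b + 1 - c) / (Gamma a * Gamma b)"
    using rr_lim incseq_le by blast
  then show ?thesis using rr_less[of n] by linarith
qed

end


context
  fixes a b c :: real
  assumes a: "0 < a" and b: "0 < b" and c1: "a + b < c" and c2: "c < a + b + 1"
begin

lemma AA_Suc_rr: "AA a b c (Suc n) = rr a b c n * (pochhammer (a + b + 1 - c) n / fact (Suc n))"
proof -
  have "pochhammer (a + b + 1 - c) n > 0" using c2 by (intro pochhammer_pos) simp
  then show ?thesis unfolding AA_def rr_def by simp
qed

lemma pp_Suc: "pp a b c (Suc n) = (a + b - c) * (pochhammer (a + b + 1 - c) n / fact (Suc n))"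
proof -
  have e: "a + b - c + 1 = a + b + 1 - c" by simp
  have e2: "-(c - a - b) = a + b - c" by simp
  show ?thesis unfolding pp_def e2 pochhammer_rec e by simp
qed

lemma QQ_eq: "QQ a b c * (c - a - b) = Gamma c * Gamma (a + b + 1 - c) / (Gamma a * Gamma b)"
proof -
  have "c - a - b \<noteq> 0" using c1 by simp
  moreover have "\<And>s X Y Z :: real. s \<noteq> 0 \<Longrightarrow> X / (s * Y * Z) * s = X / (Y * Z)" by simp
  ultimately show ?thesis unfolding QQ_def by simp
qed

lemma AA_lt_pp: "AA a b c (Suc n) < - QQ a b c * pp a b c (Suc n)"
proof -
  have "pochhammer (a + b + 1 - c) n / fact (Suc n) > 0" using c2 by (intro divide_pos_pos pochhammer_pos) auto
  then have "rr a b c n * (pochhammer (a + b + 1 - c) n / fact (Suc n)) <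
     (QQ a b c * (c - a - b)) * (pochhammer (a + b + 1 - c) n / fact (Suc n))"
    unfolding QQ_eq using rr_lt[OF a b c1 c2] by (intro mult_strict_right_mono)
  moreover have "- QQ a b c * pp a b c (Suc n) = (QQ a b c * (c - a - b)) * (pochhammer (a + b + 1 - c) n / fact (Suc n))"
  proof -
    have "\<And>X q :: real. - q * ((a + b - c) * X) = (q * (c - a - b)) * X" by (simp add: algebra_simps)
    then show ?thesis unfolding pp_Suc by blast
  qed
  ultimately show ?thesis unfolding AA_Suc_rr by simp
qed

lemma pp_partial: "(\<Sum>k<Suc N. pp a b c k) = pochhammer (a + b + 1 - c) N / fact N"
proof (induction N)
  case 0
  then show ?case by (simp add: pp_def)
next
  case (Suc N)
  have fS: "fact (Suc N) = fact N * real (Suc N)" by (simp add: fact_Suc)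
  have h: "\<And>P f m::real. f \<noteq> 0 \<Longrightarrow> m \<noteq> 0 \<Longrightarrow>
     P / f + (a + b - c) * (P / (f * m)) = P * (m + (a + b - c)) / (f * m)"
    by (simp add: field_simps)
  have "(\<Sum>k<Suc (Suc N). pp a b c k) = pochhammer (a + b + 1 - c) N / fact N
        + (a + b - c) * (pochhammer (a + b + 1 - c) N / (fact N * real (Suc N)))"
    using Suc by (simp add: pp_Suc fS)
  also have "\<dots> = pochhammer (a + b + 1 - c) N * (real (Suc N) + (a + b - c)) / (fact N * real (Suc N))"
    by (rule h) auto
  also have "\<dots> = pochhammer (a + b + 1 - c) (Suc N) / fact (Suc N)"
    unfolding fS pochhammer_Suc by (simp add: algebra_simps)
  finally show ?case .
qed

lemma pp_sums: "pp a b c sums 0"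
proof -
  have "(\<lambda>N. pochhammer (a + b + 1 - c) N / fact N) \<longlonglongrightarrow> 0"
    using c1 c2 by (intro poch_d_lim) auto
  then have "(\<lambda>N. \<Sum>k<Suc N. pp a b c k) \<longlonglongrightarrow> 0" by (simp only: pp_partial)
  then have "(\<lambda>N. \<Sum>k<N. pp a b c k) \<longlonglongrightarrow> 0" by (rule LIMSEQ_imp_Suc)
  then show ?thesis by (simp add: sums_def)
qed

lemma AA_summable: "summable (AA a b c)"
proof -
  have c: "c > 0" using a b c1 by simp
  have "summable (\<lambda>n. - QQ a b c * pp a b c (Suc n))"
    using pp_sums by (intro summable_mult) (simp add: summable_Suc_iff sums_summable)
  then have "summable (\<lambda>n. AA a b c (Suc n))"
  proof (rule summable_comparison_test'[where N=0])
    fix n :: nat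
    show "norm (AA a b c (Suc n)) \<le> - QQ a b c * pp a b c (Suc n)"
      using AA_lt_pp[of n] AA_pos[OF a b c, of "Suc n"] by simp
  qed
  then show ?thesis by (simp add: summable_Suc_iff)
qed

lemma nAA_lim: "(\<lambda>n. real n * AA a b c n) \<longlonglongrightarrow> 0"
proof -
  have c: "c > 0" using a b c1 by simp
  define L where "L = Gamma c * Gamma (a + b + 1 - c) / (Gamma a * Gamma b)"
  have "(\<lambda>n. L * (pochhammer (a + b + 1 - c) n / fact n)) \<longlonglongrightarrow> L * 0"
    using c1 c2 by (intro tendsto_intros poch_d_lim) auto
  then have up: "(\<lambda>n. L * (pochhammer (a + b + 1 - c) n / fact n)) \<longlonglongrightarrow> 0" by simp
  have eq: "real (Suc n) * AA a b c (Suc n) = rr a b c n * (pochhammer (a + b + 1 - c) n / fact n)" for n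
  proof -
    have h: "\<And>P f m r::real. f \<noteq> 0 \<Longrightarrow> m \<noteq> 0 \<Longrightarrow> m * (r * (P / (f * m))) = r * (P / f)"
      by (simp add: field_simps)
    show ?thesis unfolding AA_Suc_rr fact_Suc by (subst mult.commute[of "real (Suc n)" "fact n"]) (rule h, auto)
  qed
  have "(\<lambda>n. real (Suc n) * AA a b c (Suc n)) \<longlonglongrightarrow> 0"
  proof (rule tendsto_sandwich[OF _ _ tendsto_const up])
    show "\<forall>\<^sub>F n in sequentially. 0 \<le> real (Suc n) * AA a b c (Suc n)"
      using AA_pos[OF a b c] by (auto intro!: always_eventually less_imp_le)
    have X: "pochhammer (a + b + 1 - c) n / fact n \<ge> 0" for n
      using c2 by (intro divide_nonneg_nonneg pochhammer_nonneg) auto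
    then show "\<forall>\<^sub>F n in sequentially. real (Suc n) * AA a b c (Suc n) \<le> L * (pochhammer (a + b + 1 - c) n / fact n)"
    proof (intro always_eventually allI)
      fix n
      show "real (Suc n) * AA a b c (Suc n) \<le> L * (pochhammer (a + b + 1 - c) n / fact n)"
        unfolding eq L_def using rr_lt[OF a b c1 c2, of n] X[of n]
        by (intro mult_right_mono) auto
    qed
  qed
  then show ?thesis by (rule LIMSEQ_imp_Suc)
qed

end


lemma poch_mono: fixes x y :: real assumes "0 < x" "x \<le> y" shows "pochhammer x n \<le> pochhammer y n"
proof (induction n)
  case (Suc n)
  have "pochhammer x n * (x + n) \<le> pochhammer y n * (y + n)"
    using Suc assms by (intro mult_mono) (auto intro: pochhammer_nonneg)
  then show ?case by (simp add: pochhammer_Suc)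
qed simp

lemma AA_anti: assumes "0 < a" "0 < b" "0 < c" "c \<le> c'" shows "AA a b c' n \<le> AA a b c n"
  unfolding AA_def using assms
  by (intro divide_left_mono mult_right_mono poch_mono mult_pos_pos mult_nonneg_nonneg pochhammer_pos pochhammer_nonneg)
     auto

lemma AA_Suc_bound: assumes "0 < a" "0 < b" "0 < c" "c \<le> c'"
  shows "c' * AA a b c' (Suc n) \<le> c * AA a b c (Suc n)"
proof -
  have e: "x * AA a b x (Suc n) = pochhammer a (Suc n) * pochhammer b (Suc n) / (pochhammer (x + 1) n * fact (Suc n))"
    if "x > 0" for x
    unfolding AA_def pochhammer_rec using that by simp
  have "c * AA a b c (Suc n) = pochhammer a (Suc n) * pochhammer b (Suc n) / (pochhammer (c + 1) n * fact (Suc n))"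
    by (rule e) (use assms in simp)
  moreover have "c' * AA a b c' (Suc n) = pochhammer a (Suc n) * pochhammer b (Suc n) / (pochhammer (c' + 1) n * fact (Suc n))"
    by (rule e) (use assms in simp)
  moreover have "pochhammer a (Suc n) * pochhammer b (Suc n) / (pochhammer (c' + 1) n * fact (Suc n)) \<le>
      pochhammer a (Suc n) * pochhammer b (Suc n) / (pochhammer (c + 1) n * fact (Suc n))"
    using assms
    by (intro divide_left_mono mult_right_mono poch_mono mult_pos_pos mult_nonneg_nonneg pochhammer_pos pochhammer_nonneg)
     auto
  ultimately show ?thesis by simp
qed

lemma AA_tele: assumes "0 < a" "0 < b" "0 < c"
  shows "c * (c - a - b) * AA a b c n - (c - a) * (c - b) * AA a b (c + 1) n
    = c * (real n * AA a b c n) - c * (real (Suc n) * AA a b c (Suc n))"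
proof -
  have pc: "pochhammer c (Suc n) = c * pochhammer (c + 1) n" "pochhammer c (Suc n) = pochhammer c n * (c + n)"
    using pochhammer_rec pochhammer_Suc by auto
  have pos: "pochhammer c n > 0" "pochhammer (c + 1) n > 0" "c + n > 0" using assms by (auto intro!: pochhammer_pos)
  have e1: "AA a b (c + 1) n = AA a b c n * c / (c + n)"
  proof -
    have "pochhammer (c + 1) n = pochhammer c n * (c + n) / c" using pc assms by (simp add: field_simps)
    moreover have "\<And>X P D F. c \<noteq> 0 \<Longrightarrow> D \<noteq> 0 \<Longrightarrow> P \<noteq> 0 \<Longrightarrow> F \<noteq> 0 \<Longrightarrow>
       X / ((P * D / c) * F) = X / (P * F) * c / D" by (simp add: field_simps)
    ultimately show ?thesis unfolding AA_def using pos assms by simp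
  qed
  have e2: "AA a b c (Suc n) = AA a b c n * ((a + n) * (b + n)) / ((c + n) * (n + 1))"
    unfolding AA_def using pos by (simp add: pochhammer_Suc fact_Suc field_simps)
  define D where "D = c + real n"
  define m where "m = real n + 1"
  have Dm: "D \<noteq> 0" "m \<noteq> 0" using pos by (auto simp: D_def m_def)
  have rs: "real (Suc n) = m" "real (n + 1) = m" by (simp_all add: m_def)
  have "c * (c - a - b) * AA a b c n - (c - a) * (c - b) * (AA a b c n * c / D)
    = c * (real n * AA a b c n) - c * (m * (AA a b c n * ((a + n) * (b + n)) / (D * m)))"
    using Dm by (simp add: field_simps) (simp add: D_def algebra_simps)
  then show ?thesis unfolding e1 e2 rs D_def[symmetric] m_def[symmetric] .
qed


lemma frac4:
  fixes F P1 P2 P3 P4 G1 G2 G3 G4 D1 D2 D3 D4 :: real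
  assumes "F \<noteq> 0" "P3 \<noteq> 0" "P4 \<noteq> 0" "G1 \<noteq> 0" "G2 \<noteq> 0" "G3 \<noteq> 0" "G4 \<noteq> 0"
    "D1 \<noteq> 0" "D2 \<noteq> 0" "D3 \<noteq> 0" "D4 \<noteq> 0"
  shows "(F * P1 / (G1 * D1)) * (F * P2 / (G2 * D2)) / ((F * P3 / (G3 * D3)) * (F * P4 / (G4 * D4)))
    = (P1 * P2) / (P3 * P4) * (D3 * D4 / (D1 * D2)) * (G3 * G4 / (G1 * G2))"
  using assms by (simp add: field_simps)

definition RR :: "real \<Rightarrow> real \<Rightarrow> real \<Rightarrow> nat \<Rightarrow> real" where
  "RR a b c m = pochhammer (c - a) m * pochhammer (c - b) m / (pochhammer c m * pochhammer (c - a - b) m)"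

context
  fixes a b c :: real
  assumes a: "0 < a" and b: "0 < b" and c1: "a + b < c" and c2: "c < a + b + 1"
begin

lemma cpos: "c > 0" using a b c1 by simp

lemma summ_c': assumes "c \<le> c'" shows "summable (AA a b c')"
  using AA_summable[OF a b c1 c2]
proof (rule summable_comparison_test'[where N=0])
  fix n
  have "AA a b c' n > 0" using AA_pos[OF a b, of c' n] assms cpos by simp
  then show "norm (AA a b c' n) \<le> AA a b c n" using AA_anti[OF a b cpos assms, of n] by simp
qed

lemma nAA_c': assumes "c \<le> c'" shows "(\<lambda>n. real n * AA a b c' n) \<longlonglongrightarrow> 0"
proof (rule tendsto_sandwich[OF _ _ tendsto_const nAA_lim[OF a b c1 c2]])
  have "c' > 0" using assms cpos by simp
  then have "0 \<le> real n * AA a b c' n" for n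
    using AA_pos[OF a b \<open>c' > 0\<close>, of n] by simp
  then show "\<forall>\<^sub>F n in sequentially. 0 \<le> real n * AA a b c' n" by simp
  show "\<forall>\<^sub>F n in sequentially. real n * AA a b c' n \<le> real n * AA a b c n"
    using AA_anti[OF a b cpos assms] by (auto intro!: always_eventually mult_left_mono)
qed

lemma SS_rec: assumes "c \<le> c'"
  shows "c' * (c' - a - b) * suminf (AA a b c') = (c' - a) * (c' - b) * suminf (AA a b (c' + 1))"
proof -
  have c': "c' > 0" using assms cpos by simp
  define g where "g n = c' * (real n * AA a b c' n)" for n
  have "(\<lambda>N. \<Sum>n<N. g n - g (Suc n)) = (\<lambda>N. g 0 - g N)" by (simp add: sum_lessThan_telescope')
  moreover have "(\<lambda>N. g 0 - g N) \<longlonglongrightarrow> 0 - c' * 0"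
    unfolding g_def using nAA_c'[OF assms] by (intro tendsto_intros) simp_all
  ultimately have "(\<lambda>n. g n - g (Suc n)) sums 0" by (simp add: sums_def)
  moreover have "(\<lambda>n. g n - g (Suc n)) = (\<lambda>n. c' * (c' - a - b) * AA a b c' n - (c' - a) * (c' - b) * AA a b (c' + 1) n)"
    unfolding g_def using AA_tele[OF a b c'] by simp
  moreover have "(\<lambda>n. c' * (c' - a - b) * AA a b c' n - (c' - a) * (c' - b) * AA a b (c' + 1) n) sums
     (c' * (c' - a - b) * suminf (AA a b c') - (c' - a) * (c' - b) * suminf (AA a b (c' + 1)))"
    using summ_c'[OF assms] summ_c'[of "c' + 1"] assms
    by (intro sums_diff sums_mult summable_sums) auto
  ultimately show ?thesis using sums_unique2 by fastforce
qed

lemma SS_iter: "suminf (AA a b c) = RR a b c m * suminf (AA a b (c + real m))"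
proof (induction m)
  case 0
  then show ?case by (simp add: RR_def)
next
  case (Suc m)
  define c' where "c' = c + real m"
  have ge: "c \<le> c'" by (simp add: c'_def)
  have nz: "c' \<noteq> 0" "c' - a - b \<noteq> 0" using ge cpos c1 by auto
  have rec: "suminf (AA a b c') = (c' - a) * (c' - b) / (c' * (c' - a - b)) * suminf (AA a b (c' + 1))"
  proof -
    have h: "\<And>K X Y :: real. K \<noteq> 0 \<Longrightarrow> K * X = Y \<Longrightarrow> X = Y / K" by (simp add: field_simps)
    have "suminf (AA a b c') = (c' - a) * (c' - b) * suminf (AA a b (c' + 1)) / (c' * (c' - a - b))"
      by (rule h) (use SS_rec[OF ge] nz in auto)
    then show ?thesis by simp
  qed
  have RS: "RR a b c (Suc m) = RR a b c m * ((c' - a) * (c' - b) / (c' * (c' - a - b)))"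
  proof -
    have "RR a b c (Suc m) = (pochhammer (c - a) m * (c - a + m) * (pochhammer (c - b) m * (c - b + m))) /
       ((pochhammer c m * (c + m)) * (pochhammer (c - a - b) m * (c - a - b + m)))"
      unfolding RR_def pochhammer_Suc ..
    also have "\<dots> = (pochhammer (c - a) m * pochhammer (c - b) m * ((c - a + m) * (c - b + m))) /
       ((pochhammer c m * pochhammer (c - a - b) m) * ((c + m) * (c - a - b + m)))"
      by (simp add: mult_ac)
    also have "\<dots> = RR a b c m * (((c - a + m) * (c - b + m)) / ((c + m) * (c - a - b + m)))"
      unfolding RR_def by (rule times_divide_times_eq[symmetric])
    finally have X: "RR a b c (Suc m) = RR a b c m * (((c - a + m) * (c - b + m)) / ((c + m) * (c - a - b + m)))" .
    have e: "c - a + m = c' - a" "c - b + m = c' - b" "c + m = c'" "c - a - b + m = c' - a - b"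
      by (simp_all add: c'_def)
    show ?thesis using X unfolding e .
  qed
  have e: "AA a b (c + real (Suc m)) = AA a b (c' + 1)" by (simp add: c'_def add_ac)
  have "suminf (AA a b c) = RR a b c m * suminf (AA a b c')" using Suc by (simp add: c'_def)
  also have "\<dots> = RR a b c (Suc m) * suminf (AA a b (c' + 1))" unfolding RS rec by (simp only: mult_ac)
  finally show ?case unfolding e .
qed

end



context
  fixes a b c :: real
  assumes a: "0 < a" and b: "0 < b" and c1: "a + b < c" and c2: "c < a + b + 1"
begin

lemma RR_lim: "RR a b c \<longlonglongrightarrow> PP a b c"
proof -
  define s where "s = c - a - b"
  have pos: "c - a > 0" "c - b > 0" "c > 0" "s > 0" using a b c1 by (auto simp: s_def)
  have ev: "eventually (\<lambda>m. ((c + m) * (s + m) / ((c - a + m) * (c - b + m))) *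
       (Gamma_series c m * Gamma_series s m / (Gamma_series (c - a) m * Gamma_series (c - b) m)) = RR a b c m) sequentially"
    using eventually_gt_at_top[of 0]
  proof eventually_elim
    case (elim m)
    have e1: "real m powr (c - a) * real m powr (c - b) = real m powr c * real m powr s"
      by (simp add: powr_add[symmetric] s_def)
    have gp: "Gamma_series (c - a) m > 0" "Gamma_series (c - b) m > 0" "Gamma_series c m > 0" "Gamma_series s m > 0"
      using GS_pos pos elim by auto
    have pw: "real m powr c > 0" "real m powr s > 0" using elim by auto
    have "RR a b c m = (fact m * real m powr (c - a) / (Gamma_series (c - a) m * (c - a + m))) *
         (fact m * real m powr (c - b) / (Gamma_series (c - b) m * (c - b + m))) /
       ((fact m * real m powr c / (Gamma_series c m * (c + m))) * (fact m * real m powr s / (Gamma_series s m * (s + m))))"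
      unfolding RR_def s_def[symmetric] using poch_GS' pos elim by simp
    also have "\<dots> = (real m powr (c - a) * real m powr (c - b)) / (real m powr c * real m powr s) *
       ((c + m) * (s + m) / ((c - a + m) * (c - b + m))) *
       (Gamma_series c m * Gamma_series s m / (Gamma_series (c - a) m * Gamma_series (c - b) m))"
      using gp pos elim pw by (intro frac4) auto
    also have "\<dots> = ((c + m) * (s + m) / ((c - a + m) * (c - b + m))) *
       (Gamma_series c m * Gamma_series s m / (Gamma_series (c - a) m * Gamma_series (c - b) m))"
      unfolding e1 using pw by simp
    finally show ?case by simp
  qed
  have l1a: "(\<lambda>m. (c + real m) / (c - a + m)) \<longlonglongrightarrow> 1" by real_asymp
  have l1b: "(\<lambda>m. (s + real m) / (c - b + m)) \<longlonglongrightarrow> 1" by real_asymp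
  have "(\<lambda>m. (c + real m) / (c - a + m) * ((s + real m) / (c - b + m))) \<longlonglongrightarrow> 1 * 1"
    by (intro tendsto_intros l1a l1b)
  then have l1: "(\<lambda>m. (c + real m) * (s + m) / ((c - a + m) * (c - b + m))) \<longlonglongrightarrow> 1" by simp
  have "(\<lambda>m. ((c + m) * (s + m) / ((c - a + m) * (c - b + m))) *
       (Gamma_series c m * Gamma_series s m / (Gamma_series (c - a) m * Gamma_series (c - b) m)))
       \<longlonglongrightarrow> 1 * (Gamma c * Gamma s / (Gamma (c - a) * Gamma (c - b)))"
    using pos by (intro tendsto_intros l1) (auto simp: Gamma_nz)
  then have "(\<lambda>m. ((c + m) * (s + m) / ((c - a + m) * (c - b + m))) *
       (Gamma_series c m * Gamma_series s m / (Gamma_series (c - a) m * Gamma_series (c - b) m)))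
       \<longlonglongrightarrow> PP a b c" by (simp add: PP_def s_def)
  then show ?thesis using ev by (rule Lim_transform_eventually)
qed

lemma SS_shift_lim: "(\<lambda>m. suminf (AA a b (c + real m))) \<longlonglongrightarrow> 1"
proof -
  have c: "c > 0" using a b c1 by simp
  define T where "T = (\<Sum>n. AA a b c (Suc n))"
  have sumS: "summable (\<lambda>n. AA a b c' (Suc n))" if "c \<le> c'" for c'
    using summ_c'[OF a b c1 c2 that] by (simp add: summable_Suc_iff)
  have split: "suminf (AA a b c') = 1 + (\<Sum>n. AA a b c' (Suc n))" if "c \<le> c'" for c'
    using suminf_split_head[OF summ_c'[OF a b c1 c2 that]] by (simp add: AA_def)
  have lo: "0 \<le> (\<Sum>n. AA a b (c + real m) (Suc n))" for m
    using c AA_pos[OF a b] by (intro suminf_nonneg sumS) (auto intro: less_imp_le)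
  have up: "(\<Sum>n. AA a b (c + real m) (Suc n)) \<le> c / (c + real m) * T" for m
  proof -
    have cm: "c + real m > 0" using c by simp
    have "(\<Sum>n. AA a b (c + real m) (Suc n)) \<le> (\<Sum>n. c / (c + real m) * AA a b c (Suc n))"
    proof (rule suminf_le)
      fix n
      have "(c + real m) * AA a b (c + real m) (Suc n) \<le> c * AA a b c (Suc n)"
        using AA_Suc_bound[OF a b c, of "c + real m" n] by simp
      then show "AA a b (c + real m) (Suc n) \<le> c / (c + real m) * AA a b c (Suc n)"
        using cm by (simp add: field_simps)
    qed (use sumS[of "c + real m"] sumS[of c] in \<open>auto intro: summable_mult\<close>)
    also have "\<dots> = c / (c + real m) * T" unfolding T_def using sumS[of c] by (subst suminf_mult) auto
    finally show ?thesis .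
  qed
  have "(\<lambda>m. c / (c + real m) * T) \<longlonglongrightarrow> 0 * T"
    by (intro tendsto_intros) real_asymp
  then have l0: "(\<lambda>m. c / (c + real m) * T) \<longlonglongrightarrow> 0" by simp
  have "(\<lambda>m. (\<Sum>n. AA a b (c + real m) (Suc n))) \<longlonglongrightarrow> 0"
    by (rule tendsto_sandwich[OF always_eventually always_eventually tendsto_const l0])
       (use lo up in blast)+
  then have "(\<lambda>m. 1 + (\<Sum>n. AA a b (c + real m) (Suc n))) \<longlonglongrightarrow> 1 + 0"
    by (intro tendsto_intros)
  then show ?thesis using split by simp
qed

lemma Gauss: "suminf (AA a b c) = PP a b c"
proof -
  have "(\<lambda>m. RR a b c m * suminf (AA a b (c + real m))) \<longlonglongrightarrow> PP a b c * 1"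
    by (intro tendsto_intros RR_lim SS_shift_lim)
  moreover have "(\<lambda>m. RR a b c m * suminf (AA a b (c + real m))) = (\<lambda>m. suminf (AA a b c))"
    using SS_iter[OF a b c1 c2] by simp
  ultimately have "(\<lambda>m. suminf (AA a b c)) \<longlonglongrightarrow> PP a b c" by simp
  then show ?thesis using LIMSEQ_unique[OF tendsto_const] by blast
qed

end



lemma final_alg:
  fixes F P Q t :: real
  assumes F: "F > P - Q * t" and P: "P > 1" and Q: "Q > 0" and t: "0 < t" "t < 1"
  shows "F^2 > P^2 - 2 * P * Q * t + (if P \<ge> Q then Q else P - 1)^2 * t^2"
proof (cases "P \<ge> Q")
  case True
  have "P - Q * t > 0" using True Q t
    by (smt (verit) mult_less_cancel_left2)
  then have "F^2 > (P - Q * t)^2" using F by (intro power_strict_mono) auto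
  then show ?thesis using True by (simp add: power2_eq_square algebra_simps)
next
  case False
  then have PQ: "P < Q" by simp
  show ?thesis
  proof (cases "P - Q * t \<ge> 0")
    case True
    then have "F^2 > (P - Q * t)^2" using F by (intro power_strict_mono) auto
    moreover have "(P - 1)^2 < Q^2" using PQ P by (intro power_strict_mono) auto
    then have "(P - 1)^2 * t^2 < Q^2 * t^2" using t by (intro mult_strict_right_mono) auto
    ultimately show ?thesis using PQ by (simp add: power2_eq_square algebra_simps)
  next
    case False
    then have "Q * t > P" by simp
    then have "P * (Q * t) > P * P" using P by (intro mult_strict_left_mono) auto
    then have f1: "2 * P * Q * t > 2 * P^2" by (simp add: power2_eq_square mult_ac)
    have "(P - 1)^2 * t^2 \<le> (P - 1)^2 * 1"
      using t by (intro mult_left_mono) (auto simp: power_le_one)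
    moreover have "(P - 1)^2 \<le> P^2" using P by (intro power_mono) auto
    ultimately have f2: "(P - 1)^2 * t^2 \<le> P^2" by linarith
    from f1 f2 have "P^2 - 2 * P * Q * t + (P - 1)^2 * t^2 < 0" by linarith
    then show ?thesis using PQ by (smt (verit) zero_le_power2)
  qed
qed

theorem lemma5p3:
  fixes a b c w :: real
  assumes "0 < a" "0 < b" "a + b < c" "c < a + b + 1"
    and "0 < w" "w < 1"
  shows "(hyp2F1 a b c w)^2 >
           (PP a b c)^2 - 2 * PP a b c * QQ a b c * (1 - w) powr (c - a - b)
           + (qq a b c)^2 * (1 - w) powr (2 * (c - a - b))"
proof -
  note a = assms(1) and b = assms(2) and c1 = assms(3) and c2 = assms(4) and w = assms(5,6)
  define s where "s = c - a - b"
  define t where "t = (1 - w) powr s"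
  define P where "P = PP a b c"
  define Q where "Q = QQ a b c"
  define F where "F = hyp2F1 a b c w"
  have s: "0 < s" "s < 1" using c1 c2 by (auto simp: s_def)
  have t: "0 < t" "t < 1"
  proof -
    show "0 < t" using w by (simp add: t_def)
    have "(1 - w) powr s < 1 powr s" using w s by (intro powr_less_mono2) auto
    then show "t < 1" by (simp add: t_def)
  qed
  have t2: "(1 - w) powr (2 * s) = t^2"
    unfolding t_def by (simp add: power2_eq_square powr_add[symmetric])
  have Q: "Q > 0" unfolding Q_def QQ_def using a b c1 c2
    by (intro divide_pos_pos mult_pos_pos Gamma_real_pos) auto
  have cpos: "c > 0" using a b c1 by simp
  have Gs: "suminf (AA a b c) = P" unfolding P_def by (rule Gauss[OF a b c1 c2])
  have summ: "summable (AA a b c)" by (rule AA_summable[OF a b c1 c2])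
  have P1: "P > 1"
  proof -
    have "summable (\<lambda>n. AA a b c (Suc n))" using summ by (simp add: summable_Suc_iff)
    then have "0 < (\<Sum>n. AA a b c (Suc n))"
      by (rule suminf_pos2[where i=0]) (use AA_pos[OF a b cpos] in \<open>auto intro: less_imp_le\<close>)
    then show ?thesis using suminf_split_head[OF summ] Gs by (simp add: AA_def)
  qed
  have Fsum: "(\<lambda>n. AA a b c n * w^n) sums F"
  proof -
    have "summable (\<lambda>n. AA a b c n * w^n)"
    proof (rule summable_comparison_test'[OF summ, where N=0])
      fix n
      have "AA a b c n * w^n \<le> AA a b c n * 1"
        using AA_pos[OF a b cpos, of n] w by (intro mult_left_mono power_le_one) auto
      then show "norm (AA a b c n * w^n) \<le> AA a b c n" using AA_pos[OF a b cpos, of n] w by simp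
    qed
    then show ?thesis unfolding F_def hyp2F1_def AA_def by (rule summable_sums)
  qed
  have tsum: "(\<lambda>n. pp a b c n * w^n) sums t"
  proof -
    have "(\<lambda>n. (s gchoose n) * (-w)^n) sums (1 + -w) powr s"
      using w by (intro gen_binomial_real) auto
    moreover have "(s gchoose n) * (-w)^n = pp a b c n * w^n" for n
    proof -
      have "(-1::real)^n * (-1)^n = 1" by (simp add: power_mult_distrib[symmetric])
      then show ?thesis unfolding gbinomial_pochhammer pp_def s_def[symmetric] power_minus[of w]
        by (simp add: field_simps)
    qed
    ultimately show ?thesis by (simp add: t_def)
  qed
  have h1: "(\<lambda>n. AA a b c n * w^n + Q * (pp a b c n * w^n)) sums (F + Q * t)"
    by (intro sums_add sums_mult Fsum tsum)
  have h2: "(\<lambda>n. AA a b c n + Q * pp a b c n) sums (P + Q * 0)"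
    using summ Gs by (intro sums_add sums_mult pp_sums[OF a b c1 c2]) auto
  have h3: "(\<lambda>n. (AA a b c n + Q * pp a b c n) * (w^n - 1)) sums ((F + Q * t) - (P + Q * 0))"
    using sums_diff[OF h1 h2] by (simp add: algebra_simps)
  have pos: "0 < (AA a b c n + Q * pp a b c n) * (w^n - 1)" if n0: "n > 0" for n
  proof -
    obtain k where k: "n = Suc k" using n0 by (cases n) auto
    have "AA a b c n + Q * pp a b c n < 0" using AA_lt_pp[OF a b c1 c2, of k] unfolding k Q_def by simp
    moreover have "w^n < 1" using w n0 by (simp add: power_less_one_iff)
    ultimately show ?thesis by (intro mult_neg_neg) auto
  qed
  have "0 < (\<Sum>n. (AA a b c n + Q * pp a b c n) * (w^n - 1))"
  proof (rule suminf_pos2[where i=1])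
    show "summable (\<lambda>n. (AA a b c n + Q * pp a b c n) * (w^n - 1))" using h3 by (rule sums_summable)
    show "0 \<le> (AA a b c n + Q * pp a b c n) * (w^n - 1)" for n
      using pos[of n] by (cases n) auto
  qed (use pos[of 1] in simp)
  then have FP: "F > P - Q * t" using sums_unique[OF h3] by simp
  have "F^2 > P^2 - 2 * P * Q * t + (if P \<ge> Q then Q else P - 1)^2 * t^2"
    by (rule final_alg[OF FP P1 Q t])
  then show ?thesis unfolding qq_def s_def[symmetric] t2 t_def[symmetric] F_def[symmetric] P_def[symmetric] Q_def[symmetric] .
qed

end
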